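(* For every $n\ge 2$, under the Yule model, $$E_Y(D_n)=2n(n+1)\sum_{i=2}^n\frac1i-2n(n-1).$$
   Context: $\mathcal{BT}_n$ is the set of binary phylogenetic trees with leaves bijectively labeled by $\{1,\dots,n\}$ (rooted, every internal node with exactly two children). For leaves $i,j$ of $T$, the nodal distance $d_T(i,j)$ is the number of edges of the undirected path between them, and the total area is $D(T)=\sum_{1\le i<j\le n}d_T(i,j)$. $D_n$ is $D(T)$ for random $T\in\mathcal{BT}_n$. Under the Yule model $T$ has probability $P_Y(T)=\frac{2^{n-1}}{n!}\prod_{v\in V_{int}(T)}\frac{1}{\kappa_T(v)-1}$, with $V_{int}(T)$ the internal nodes and $\kappa_T(v)$ the number of leaves below $v$; $E_Y$ denotes expectation under it. *)

theory Defs
  imports Complex_Main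
begin

text \<open>A phylogenetic tree is unordered;
  we represent each one by its unique canonical ordered representative, in which
  for every internal node the smallest leaf label of the left subtree is smaller
  than the smallest leaf label of the right subtree.\<close>

datatype ltree = Leaf nat | Node ltree ltree

fun leaves :: "ltree \<Rightarrow> nat list" where
  "leaves (Leaf a) = [a]"
| "leaves (Node l r) = leaves l @ leaves r"

fun canonical :: "ltree \<Rightarrow> bool" where
  "canonical (Leaf a) = True"
| "canonical (Node l r) =
     (canonical l \<and> canonical r \<and> Min (set (leaves l)) < Min (set (leaves r)))"

definition BT :: "nat \<Rightarrow> ltree set" where
  "BT n = {t. distinct (leaves t) \<and> set (leaves t) = {1..n} \<and> canonical t}"

fun depth :: "ltree \<Rightarrow> nat \<Rightarrow> nat" where
  "depth (Leaf a) i = 0"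
| "depth (Node l r) i =
     (if i \<in> set (leaves l) then depth l i + 1 else depth r i + 1)"

fun nodal_dist :: "ltree \<Rightarrow> nat \<Rightarrow> nat \<Rightarrow> nat" where
  "nodal_dist (Leaf a) i j = 0"
| "nodal_dist (Node l r) i j =
     (if i \<in> set (leaves l) \<and> j \<in> set (leaves l) then nodal_dist l i j
      else if i \<in> set (leaves r) \<and> j \<in> set (leaves r) then nodal_dist r i j
      else depth (Node l r) i + depth (Node l r) j)"

definition total_area :: "nat \<Rightarrow> ltree \<Rightarrow> real" where
  "total_area n t = (\<Sum>i\<in>{1..n}. \<Sum>j\<in>{i<..n}. real (nodal_dist t i j))"

fun int_prod :: "ltree \<Rightarrow> real" where
  "int_prod (Leaf a) = 1"
| "int_prod (Node l r) =
     (1 / (real (length (leaves (Node l r))) - 1)) * int_prod l * int_prod r"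

definition yule_prob :: "nat \<Rightarrow> ltree \<Rightarrow> real" where
  "yule_prob n t = 2 ^ (n - 1) / fact n * int_prod t"

definition expected_area_yule :: "nat \<Rightarrow> real" where
  "expected_area_yule n = (\<Sum>t\<in>BT n. yule_prob n t * total_area n t)"

end

theory Submission
  imports Defs
begin


definition H :: "nat \<Rightarrow> real" where "H m = (\<Sum>i=1..m. 1 / real i)"

lemma H_Suc: "H (Suc m) = H m + 1 / (real m + 1)"
  by (simp add: H_def add.commute)

definition E1c :: "nat \<Rightarrow> real" where "E1c k = 2 * real k * (H k - 1)"
definition E2c :: "nat \<Rightarrow> real" where "E2c k = 4 * real k * (real k + 1) * H k - 8 * real k ^ 2"

lemma sum_kH: "(\<Sum>k=1..m. real k * H k) = real m * (real m + 1) / 2 * H m - real m * (real m - 1) / 4"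
proof (induction m)
  case (Suc m)
  have "(\<Sum>k=1..Suc m. real k * H k) = (\<Sum>k=1..m. real k * H k) + real (Suc m) * H (Suc m)" by simp
  also have "\<dots> = real m * (real m + 1) / 2 * H m - real m * (real m - 1) / 4 + real (Suc m) * H (Suc m)"
    using Suc.IH by simp
  finally show ?case by (simp add: H_Suc field_simps)
qed simp

lemma sum_k2H: "(\<Sum>k=1..m. real k ^ 2 * H k) =
   real m * (real m + 1) * (2 * real m + 1) / 6 * H m - real m * (real m - 1) * (4 * real m + 1) / 36"
proof (induction m)
  case (Suc m)
  have "(\<Sum>k=1..Suc m. real k ^ 2 * H k) = (\<Sum>k=1..m. real k ^ 2 * H k) + real (Suc m) ^ 2 * H (Suc m)" by simp
  also have "\<dots> = real m * (real m + 1) * (2 * real m + 1) / 6 * H m - real m * (real m - 1) * (4 * real m + 1) / 36 + real (Suc m) ^ 2 * H (Suc m)"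
    using Suc.IH by simp
  finally show ?case by (simp add: H_Suc field_simps power2_eq_square)
qed simp

lemma sum_k: "(\<Sum>k=1..m. real k) = real m * (real m + 1) / 2"
  by (induction m) (simp_all add: field_simps)

lemma sum_k2: "(\<Sum>k=1..m. real k ^ 2) = real m * (real m + 1) * (2 * real m + 1) / 6"
  by (induction m) (simp_all add: field_simps power2_eq_square)

lemma sum_k3: "(\<Sum>k=1..m. real k ^ 3) = (real m * (real m + 1) / 2) ^ 2"
  by (induction m) (simp_all add: field_simps power2_eq_square power3_eq_cube)

lemma rev_sum: "(\<Sum>k=1..m. f (Suc m - k)) = (\<Sum>k=1..m. (f k :: real))"
  using sum.atLeastAtMost_rev[of f 1 m] by simp

lemma R1: "(\<Sum>k=1..m. real k * (E1c k + E1c (Suc m - k) + real (Suc m)))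
   = real (Suc m) * real m / 2 * E1c (Suc m)"
proof -
  have r: "(\<Sum>k=1..m. real k * E1c (Suc m - k)) = (\<Sum>k=1..m. real (Suc m - k) * E1c k)"
  proof -
    have "(\<Sum>k=1..m. real k * E1c (Suc m - k)) = (\<Sum>k=1..m. (\<lambda>k. real (Suc m - k) * E1c k) (Suc m - k))"
      by (rule sum.cong) auto
    also have "\<dots> = (\<Sum>k=1..m. real (Suc m - k) * E1c k)" by (rule rev_sum)
    finally show ?thesis .
  qed
  have a: "(\<Sum>k=1..m. real k * (E1c k + E1c (Suc m - k) + real (Suc m)))
     = (\<Sum>k=1..m. real k * E1c k) + (\<Sum>k=1..m. real k * E1c (Suc m - k)) + real (Suc m) * (\<Sum>k=1..m. real k)"
    by (simp add: sum.distrib sum_distrib_left algebra_simps)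
  have b: "(\<Sum>k=1..m. real k * E1c k) + (\<Sum>k=1..m. real (Suc m - k) * E1c k) = (\<Sum>k=1..m. real (Suc m) * E1c k)"
    by (simp add: sum.distrib[symmetric] algebra_simps of_nat_diff)
  have c: "(\<Sum>k=1..m. real (Suc m) * E1c k) = real (Suc m) * (2 * (\<Sum>k=1..m. real k * H k) - 2 * (\<Sum>k=1..m. real k))"
    by (simp add: E1c_def sum_distrib_left sum_subtractf algebra_simps)
  have "(\<Sum>k=1..m. real k * (E1c k + E1c (Suc m - k) + real (Suc m)))
     = real (Suc m) * (2 * (\<Sum>k=1..m. real k * H k) - 2 * (\<Sum>k=1..m. real k)) + real (Suc m) * (\<Sum>k=1..m. real k)"
    using a b c r by simp
  also have "\<dots> = real (Suc m) * real m / 2 * E1c (Suc m)"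
    unfolding sum_kH sum_k by (simp add: E1c_def H_Suc field_simps)
  finally show ?thesis .
qed

lemma R2: "(\<Sum>k=1..m. real k * (E2c k + E2c (Suc m - k) + 2 * real (Suc m - k) * E1c k
      + 2 * real k * E1c (Suc m - k) + 4 * real k * real (Suc m - k)))
   = real (Suc m) * real m / 2 * E2c (Suc m)"
proof -
  define n where "n = Suc m"
  define G where "G j = real (n - j) * E2c j + 2 * real (n - j) ^ 2 * E1c j" for j
  have "(\<Sum>k=1..m. real k * (E2c k + E2c (Suc m - k) + 2 * real (Suc m - k) * E1c k
      + 2 * real k * E1c (Suc m - k) + 4 * real k * real (Suc m - k)))
     = (\<Sum>k=1..m. (real k * E2c k + 2 * real k * real (n - k) * E1c k + 4 * real k ^ 2 * real (n - k)) + G (Suc m - k))"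
    by (rule sum.cong) (auto simp: G_def n_def algebra_simps power2_eq_square)
  also have "\<dots> = (\<Sum>k=1..m. (real k * E2c k + 2 * real k * real (n - k) * E1c k + 4 * real k ^ 2 * real (n - k))) + (\<Sum>k=1..m. G k)"
    by (simp only: sum.distrib rev_sum)
  also have "\<dots> = (\<Sum>k=1..m. 4 * real n * (real n + 1) * (real k * H k) - 4 * real n ^ 2 * real k - 4 * real k ^ 3)"
    by (simp add: sum.distrib[symmetric], rule sum.cong)
       (auto simp: G_def n_def E1c_def E2c_def of_nat_diff algebra_simps power2_eq_square power3_eq_cube)
  also have "\<dots> = 4 * real n * (real n + 1) * (\<Sum>k=1..m. real k * H k) - 4 * real n ^ 2 * (\<Sum>k=1..m. real k) - 4 * (\<Sum>k=1..m. real k ^ 3)"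
    by (simp add: sum_subtractf sum_distrib_left)
  also have "\<dots> = real (Suc m) * real m / 2 * E2c (Suc m)"
    unfolding sum_kH sum_k sum_k3 n_def by (simp add: E2c_def H_Suc field_simps power2_eq_square)
  finally show ?thesis .
qed



definition BTs :: "nat set \<Rightarrow> ltree set" where
  "BTs S = {t. distinct (leaves t) \<and> set (leaves t) = S \<and> canonical t}"
definition Splits :: "nat set \<Rightarrow> nat set set" where
  "Splits S = {A. A \<subseteq> S \<and> Min S \<in> A \<and> A \<noteq> S}"

lemma leaves_ne: "leaves t \<noteq> []"
  by (induction t) auto

lemma set_leaves_ne: "set (leaves t) \<noteq> {}"
  using leaves_ne by simp

lemma BTs_empty: "BTs {} = {}"
  using set_leaves_ne by (auto simp: BTs_def)

lemma len_node: "length (leaves (Node l r)) \<ge> 2"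
  using leaves_ne[of l] leaves_ne[of r] by (cases "leaves l"; cases "leaves r") auto

lemma BTs_single: "BTs {a} = {Leaf a}"
proof (rule set_eqI)
  fix t show "t \<in> BTs {a} \<longleftrightarrow> t \<in> {Leaf a}"
  proof (cases t)
    case (Leaf x) then show ?thesis by (auto simp: BTs_def)
  next
    case (Node l r)
    have "t \<notin> BTs {a}"
    proof
      assume "t \<in> BTs {a}"
      then have "distinct (leaves t)" "set (leaves t) = {a}" by (auto simp: BTs_def)
      then have "length (leaves t) = 1" using distinct_card by fastforce
      with len_node[of l r] Node show False by simp
    qed
    with Node show ?thesis by simp
  qed
qed

lemma finite_Splits: "finite S \<Longrightarrow> finite (Splits S)"
  unfolding Splits_def by (rule finite_subset[of _ "Pow S"]) auto

lemma BTs_split: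
  assumes S: "finite S" "2 \<le> card S"
  shows "BTs S = (\<lambda>(A,l,r). Node l r) ` (SIGMA A:Splits S. BTs A \<times> BTs (S - A))"
proof (rule set_eqI, rule iffI)
  fix t assume t: "t \<in> BTs S"
  show "t \<in> (\<lambda>(A,l,r). Node l r) ` (SIGMA A:Splits S. BTs A \<times> BTs (S - A))"
  proof (cases t)
    case (Leaf a)
    with t have "S = {a}" by (auto simp: BTs_def)
    with S show ?thesis by simp
  next
    case (Node l r)
    define A where "A = set (leaves l)"
    from t Node have d: "distinct (leaves l)" "distinct (leaves r)" "A \<inter> set (leaves r) = {}"
      and u: "A \<union> set (leaves r) = S" and c: "canonical l" "canonical r" "Min A < Min (set (leaves r))"
      by (auto simp: BTs_def A_def)
    have rS: "set (leaves r) = S - A" using d u by auto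
    have neA: "A \<noteq> {}" and neR: "set (leaves r) \<noteq> {}" using set_leaves_ne A_def by auto
    have fA: "finite A" and fR: "finite (set (leaves r))" using A_def by auto
    have "Min S = min (Min A) (Min (set (leaves r)))"
      using u[symmetric] Min_Un[OF fA neA fR neR] by simp
    then have "Min S = Min A" using c by simp
    then have "Min S \<in> A" using Min_in[OF fA neA] by simp
    moreover have "A \<noteq> S" using rS neR by auto
    moreover have "A \<subseteq> S" using u by auto
    ultimately have "A \<in> Splits S" by (simp add: Splits_def)
    moreover have "l \<in> BTs A" using d c by (simp add: BTs_def A_def)
    moreover have "r \<in> BTs (S - A)" using d c rS by (simp add: BTs_def)
    ultimately show ?thesis using Node by (auto intro!: image_eqI[where x="(A,l,r)"])
  qed
next
  fix t assume "t \<in> (\<lambda>(A,l,r). Node l r) ` (SIGMA A:Splits S. BTs A \<times> BTs (S - A))"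
  then obtain A l r where t: "t = Node l r" and A: "A \<in> Splits S" and l: "l \<in> BTs A" and r: "r \<in> BTs (S - A)"
    by auto
  from A have AS: "A \<subseteq> S" "Min S \<in> A" "A \<noteq> S" by (auto simp: Splits_def)
  have fA: "finite A" using AS S finite_subset by blast
  have neB: "S - A \<noteq> {}" using AS by auto
  have fB: "finite (S - A)" using S by auto
  have neS: "S \<noteq> {}" using AS by auto
  have mA: "Min A = Min S"
  proof (rule antisym)
    show "Min A \<le> Min S" using AS fA by simp
    have "Min A \<in> S" using Min_in[OF fA] AS by auto
    then show "Min S \<le> Min A" using S(1) by simp
  qed
  have "Min (S - A) \<in> S - A" using Min_in[OF fB neB] .
  then have "Min S < Min (S - A)"
    using AS S(1) by (metis DiffD1 DiffD2 Min_le order_le_less)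
  with l r mA AS show "t \<in> BTs S"
    by (auto simp: BTs_def t)
qed

lemma inj_split: "inj_on (\<lambda>(A,l,r). Node l r) (SIGMA A:Splits S. BTs A \<times> BTs (S - A))"
  by (auto simp: inj_on_def BTs_def)

lemma finite_BTs: "finite S \<Longrightarrow> finite (BTs S)"
proof (induction "card S" arbitrary: S rule: less_induct)
  case less
  show ?case
  proof (cases "card S \<ge> 2")
    case True
    have "finite (SIGMA A:Splits S. BTs A \<times> BTs (S - A))"
    proof (rule finite_SigmaI)
      show "finite (Splits S)" using finite_Splits less by simp
      fix A assume A: "A \<in> Splits S"
      then have AS: "A \<subseteq> S" "A \<noteq> S" "A \<noteq> {}" by (auto simp: Splits_def)
      then have "card A < card S" using less.prems psubset_card_mono by blast
      moreover have "card (S - A) < card S"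
      proof -
        have fA: "finite A" using AS less.prems finite_subset by blast
        have "card A > 0" using fA AS by (simp add: card_gt_0_iff)
        moreover have "card A \<le> card S" using AS less.prems card_mono by blast
        ultimately show ?thesis using card_Diff_subset[OF fA AS(1)] by simp
      qed
      ultimately show "finite (BTs A \<times> BTs (S - A))"
        using less AS finite_subset by (metis finite_Diff finite_cartesian_product)
    qed
    then show ?thesis using BTs_split[OF less.prems True] by simp
  next
    case False
    then have "card S = 0 \<or> card S = 1" by auto
    then show ?thesis using less.prems by (auto simp: card_1_singleton_iff BTs_empty BTs_single)
  qed
qed



lemma sum_split:
  assumes "finite S" "2 \<le> card S"
  shows "(\<Sum>t\<in>BTs S. f t) = (\<Sum>A\<in>Splits S. \<Sum>l\<in>BTs A. \<Sum>r\<in>BTs (S - A). f (Node l r))"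
proof -
  have fin: "\<And>A. A \<in> Splits S \<Longrightarrow> finite (BTs A \<times> BTs (S - A))"
    using assms(1) by (auto simp: Splits_def intro!: finite_BTs finite_subset[of _ S])
  have "(\<Sum>t\<in>BTs S. f t) = (\<Sum>x\<in>(SIGMA A:Splits S. BTs A \<times> BTs (S - A)). f ((\<lambda>(A,l,r). Node l r) x))"
    unfolding BTs_split[OF assms] by (rule sum.reindex[OF inj_split, unfolded comp_def])
  also have "\<dots> = (\<Sum>A\<in>Splits S. \<Sum>p\<in>BTs A \<times> BTs (S - A). f (Node (fst p) (snd p)))"
  proof -
    have "(\<Sum>x\<in>(SIGMA A:Splits S. BTs A \<times> BTs (S - A)). f ((\<lambda>(A,l,r). Node l r) x))
        = (\<Sum>(A,p)\<in>(SIGMA A:Splits S. BTs A \<times> BTs (S - A)). f (Node (fst p) (snd p)))"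
      by (rule sum.cong) auto
    also have "\<dots> = (\<Sum>A\<in>Splits S. \<Sum>p\<in>BTs A \<times> BTs (S - A). f (Node (fst p) (snd p)))"
      by (rule sum.Sigma[symmetric]) (auto simp: finite_Splits assms fin)
    finally show ?thesis .
  qed
  also have "\<dots> = (\<Sum>A\<in>Splits S. \<Sum>l\<in>BTs A. \<Sum>r\<in>BTs (S - A). f (Node l r))"
    by (simp add: sum.cartesian_product split_beta)
  finally show ?thesis .
qed

lemma sum_Splits:
  assumes S: "finite S" "card S = Suc m"
  shows "(\<Sum>A\<in>Splits S. h (card A)) = (\<Sum>k=1..m. real (m choose (k - 1)) * (h k :: real))"
proof -
  define a where "a = Min S"
  define T where "T = S - {a}"
  have neS: "S \<noteq> {}" using S by auto
  have aS: "a \<in> S" using Min_in[OF S(1) neS] a_def by simp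
  have fT: "finite T" and cT: "card T = m" and aT: "a \<notin> T" using S aS by (auto simp: T_def)
  have spl: "Splits S = insert a ` (Pow T - {T})"
  proof (rule set_eqI, rule iffI)
    fix A assume "A \<in> Splits S"
    then have A: "A \<subseteq> S" "a \<in> A" "A \<noteq> S" by (auto simp: Splits_def a_def)
    then have "A - {a} \<in> Pow T - {T}" using aS by (auto simp: T_def)
    moreover have "A = insert a (A - {a})" using A by auto
    ultimately show "A \<in> insert a ` (Pow T - {T})" by blast
  next
    fix A assume "A \<in> insert a ` (Pow T - {T})"
    then obtain B where B: "B \<subseteq> T" "B \<noteq> T" "A = insert a B" by auto
    then have "A \<noteq> S" using aT aS by (auto simp: T_def)
    then show "A \<in> Splits S" using B aS by (auto simp: Splits_def a_def T_def)
  qed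
  have inj: "inj_on (insert a) (Pow T - {T})"
    using aT by (auto simp: inj_on_def)
  have "(\<Sum>A\<in>Splits S. h (card A)) = (\<Sum>B\<in>Pow T - {T}. h (card (insert a B)))"
    unfolding spl by (simp add: sum.reindex[OF inj])
  also have "\<dots> = (\<Sum>B\<in>Pow T - {T}. h (Suc (card B)))"
  proof (rule sum.cong[OF refl])
    fix B assume "B \<in> Pow T - {T}"
    then have "finite B" "a \<notin> B" using aT fT finite_subset by auto
    then show "h (card (insert a B)) = h (Suc (card B))" by simp
  qed
  also have "\<dots> = (\<Sum>j\<in>{0..<m}. \<Sum>B\<in>{B \<in> Pow T - {T}. card B = j}. h (Suc (card B)))"
  proof (rule sum.group[symmetric])
    show "finite (Pow T - {T})" using fT by simp
    show "finite {0..<m}" by simp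
    show "card ` (Pow T - {T}) \<subseteq> {0..<m}"
    proof
      fix x assume "x \<in> card ` (Pow T - {T})"
      then obtain B where B: "B \<subseteq> T" "B \<noteq> T" "x = card B" by auto
      then have "card B < card T" using fT by (simp add: psubset_card_mono)
      then show "x \<in> {0..<m}" using B cT by simp
    qed
  qed
  also have "\<dots> = (\<Sum>j\<in>{0..<m}. real (m choose j) * h (Suc j))"
  proof (rule sum.cong[OF refl])
    fix j assume j: "j \<in> {0..<m}"
    have "{B \<in> Pow T - {T}. card B = j} = {B. B \<subseteq> T \<and> card B = j}" using j cT by auto
    then have "(\<Sum>B\<in>{B \<in> Pow T - {T}. card B = j}. h (Suc (card B))) = (\<Sum>B\<in>{B. B \<subseteq> T \<and> card B = j}. h (Suc j))"
      by simp
    also have "\<dots> = real (m choose j) * h (Suc j)" using n_subsets[OF fT, of j] cT by simp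
    finally show "(\<Sum>B\<in>{B \<in> Pow T - {T}. card B = j}. h (Suc (card B))) = real (m choose j) * h (Suc j)" .
  qed
  also have "\<dots> = (\<Sum>k\<in>Suc ` {0..<m}. real (m choose (k - 1)) * h k)"
    by (subst sum.reindex) auto
  also have "Suc ` {0..<m} = {1..m}" by auto
  finally show ?thesis .
qed



definition Dep :: "ltree \<Rightarrow> nat" where "Dep t = (\<Sum>i\<in>set (leaves t). depth t i)"
definition dd :: "ltree \<Rightarrow> nat" where
  "dd t = (\<Sum>i\<in>set (leaves t). \<Sum>j\<in>set (leaves t). nodal_dist t i j)"

lemma dsum: "(\<Sum>i\<in>A. \<Sum>j\<in>B. Suc (Suc (f i + g j))) = card B * (sum f A + card A) + card A * (sum g B + card B)"
proof -
  have "\<And>i. (\<Sum>j\<in>B. Suc (Suc (f i + g j))) = card B * (f i + 2) + sum g B"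
    by (simp add: sum.distrib sum_Suc algebra_simps)
  then show ?thesis by (simp add: sum.distrib sum_Suc algebra_simps sum_distrib_left sum_distrib_right)
qed

lemma Dep_Node:
  assumes "distinct (leaves (Node l r))"
  shows "Dep (Node l r) = Dep l + Dep r + card (set (leaves l)) + card (set (leaves r))"
proof -
  let ?L = "set (leaves l)" and ?R = "set (leaves r)"
  have dj: "?L \<inter> ?R = {}" using assms by simp
  have "Dep (Node l r) = (\<Sum>i\<in>?L. depth (Node l r) i) + (\<Sum>i\<in>?R. depth (Node l r) i)"
    unfolding Dep_def by (simp add: sum.union_disjoint dj)
  also have "(\<Sum>i\<in>?L. depth (Node l r) i) = (\<Sum>i\<in>?L. depth l i + 1)" by (rule sum.cong) auto
  also have "(\<Sum>i\<in>?R. depth (Node l r) i) = (\<Sum>i\<in>?R. depth r i + 1)"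
    by (rule sum.cong) (use dj in auto)
  finally show ?thesis by (simp add: sum_Suc Dep_def)
qed

lemma dd_Node:
  assumes "distinct (leaves (Node l r))"
  shows "dd (Node l r) = dd l + dd r + 2 * (card (set (leaves r)) * (Dep l + card (set (leaves l)))
        + card (set (leaves l)) * (Dep r + card (set (leaves r))))"
proof -
  let ?L = "set (leaves l)" and ?R = "set (leaves r)" and ?t = "Node l r"
  have dj: "?L \<inter> ?R = {}" using assms by simp
  have split: "\<And>i. (\<Sum>j\<in>?L \<union> ?R. nodal_dist ?t i j) = (\<Sum>j\<in>?L. nodal_dist ?t i j) + (\<Sum>j\<in>?R. nodal_dist ?t i j)"
    by (simp add: sum.union_disjoint dj)
  have "dd ?t = (\<Sum>i\<in>?L. (\<Sum>j\<in>?L. nodal_dist ?t i j) + (\<Sum>j\<in>?R. nodal_dist ?t i j))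
      + (\<Sum>i\<in>?R. (\<Sum>j\<in>?L. nodal_dist ?t i j) + (\<Sum>j\<in>?R. nodal_dist ?t i j))"
    unfolding dd_def by (simp only: leaves.simps set_append split) (simp add: sum.union_disjoint dj)
  also have "\<dots> = (\<Sum>i\<in>?L. (\<Sum>j\<in>?L. nodal_dist l i j) + (\<Sum>j\<in>?R. depth l i + 1 + (depth r j + 1)))
      + (\<Sum>i\<in>?R. (\<Sum>j\<in>?L. depth r i + 1 + (depth l j + 1)) + (\<Sum>j\<in>?R. nodal_dist r i j))"
    using dj by (intro arg_cong2[where f="(+)"] sum.cong refl) auto
  also have "\<dots> = dd l + dd r + 2 * (card ?R * (Dep l + card ?L) + card ?L * (Dep r + card ?R))"
    using dsum[where A="set (leaves l)" and B="set (leaves r)" and f="depth l" and g="depth r"]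
      dsum[where A="set (leaves r)" and B="set (leaves l)" and f="depth r" and g="depth l"]
    by (simp add: dd_def Dep_def sum.distrib)
  finally show ?thesis .
qed



definition W0 :: "nat set \<Rightarrow> real" where "W0 S = (\<Sum>t\<in>BTs S. int_prod t)"
definition W1 :: "nat set \<Rightarrow> real" where "W1 S = (\<Sum>t\<in>BTs S. int_prod t * real (Dep t))"
definition W2 :: "nat set \<Rightarrow> real" where "W2 S = (\<Sum>t\<in>BTs S. int_prod t * real (dd t))"

lemma node_facts:
  assumes S: "finite S" and A: "A \<in> Splits S" and l: "l \<in> BTs A" and r: "r \<in> BTs (S - A)"
  shows "distinct (leaves (Node l r))" "set (leaves l) = A" "set (leaves r) = S - A"
    "length (leaves (Node l r)) = card S" "card (S - A) = card S - card A"
    "card A \<le> card S"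
proof -
  have AS: "A \<subseteq> S" using A by (simp add: Splits_def)
  show d: "distinct (leaves (Node l r))" using l r by (auto simp: BTs_def)
  show "set (leaves l) = A" "set (leaves r) = S - A" using l r by (auto simp: BTs_def)
  have "set (leaves (Node l r)) = S" using l r AS by (auto simp: BTs_def)
  then show "length (leaves (Node l r)) = card S" using distinct_card[OF d] by simp
  show "card (S - A) = card S - card A" using card_Diff_subset[OF finite_subset[OF AS S] AS] .
  show "card A \<le> card S" using card_mono[OF S AS] .
qed

lemma dprod: "(\<Sum>l\<in>L. \<Sum>r\<in>R. f l * g r) = sum f L * (sum g R :: real)"
  by (simp add: sum_product)
lemma dlin: "(\<Sum>l\<in>L. \<Sum>r\<in>R. c * X l r) = c * (\<Sum>l\<in>L. \<Sum>r\<in>R. X l r :: real)"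
  by (simp add: sum_distrib_left)
lemma dadd: "(\<Sum>l\<in>L. \<Sum>r\<in>R. X l r + Y l r) = (\<Sum>l\<in>L. \<Sum>r\<in>R. X l r) + (\<Sum>l\<in>L. \<Sum>r\<in>R. Y l r :: real)"
  by (simp add: sum.distrib)

lemma inner0:
  assumes S: "finite S" and A: "A \<in> Splits S" and cdef: "c = 1 / (real (card S) - 1)"
  shows "(\<Sum>l\<in>BTs A. \<Sum>r\<in>BTs (S - A). int_prod (Node l r))
       = c * (W0 A * W0 (S - A))"
proof -
  have "(\<Sum>l\<in>BTs A. \<Sum>r\<in>BTs (S - A). int_prod (Node l r))
      = (\<Sum>l\<in>BTs A. \<Sum>r\<in>BTs (S - A). c * (int_prod l * int_prod r))"
  proof (intro sum.cong refl)
    fix l r assume l: "l \<in> BTs A" and r: "r \<in> BTs (S - A)"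
    note nf = node_facts[OF S A l r]
    show "int_prod (Node l r) = c * (int_prod l * int_prod r)"
      using nf(4) cdef by (simp only: int_prod.simps)
  qed
  then show ?thesis by (simp only: W0_def dlin dprod)
qed

lemma inner1:
  assumes S: "finite S" and A: "A \<in> Splits S" and cdef: "c = 1 / (real (card S) - 1)"
  shows "(\<Sum>l\<in>BTs A. \<Sum>r\<in>BTs (S - A). int_prod (Node l r) * real (Dep (Node l r)))
       = c * (W1 A * W0 (S - A) + W0 A * W1 (S - A) + real (card S) * (W0 A * W0 (S - A)))"
    
proof -
  have "(\<Sum>l\<in>BTs A. \<Sum>r\<in>BTs (S - A). int_prod (Node l r) * real (Dep (Node l r)))
      = (\<Sum>l\<in>BTs A. \<Sum>r\<in>BTs (S - A). c *
          ((int_prod l * real (Dep l)) * int_prod r + int_prod l * (int_prod r * real (Dep r))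
           + real (card S) * (int_prod l * int_prod r)))"
  proof (intro sum.cong refl)
    fix l r assume l: "l \<in> BTs A" and r: "r \<in> BTs (S - A)"
    note nf = node_facts[OF S A l r]
    have "real (Dep (Node l r)) = real (Dep l) + real (Dep r) + real (card S)"
      using Dep_Node[OF nf(1)] nf by simp
    moreover have "int_prod (Node l r) = c * (int_prod l * int_prod r)"
      using nf(4) cdef by (simp only: int_prod.simps)
    ultimately show "int_prod (Node l r) * real (Dep (Node l r)) = c *
          ((int_prod l * real (Dep l)) * int_prod r + int_prod l * (int_prod r * real (Dep r))
           + real (card S) * (int_prod l * int_prod r))"
      by (simp add: algebra_simps)
  qed
  then show ?thesis by (simp only: W0_def W1_def dlin dprod dadd)
qed

lemma inner2:
  assumes S: "finite S" and A: "A \<in> Splits S" and cdef: "c = 1 / (real (card S) - 1)"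
  shows "(\<Sum>l\<in>BTs A. \<Sum>r\<in>BTs (S - A). int_prod (Node l r) * real (dd (Node l r)))
       = c * (W2 A * W0 (S - A) + W0 A * W2 (S - A)
           + 2 * real (card (S - A)) * (W1 A * W0 (S - A)) + 2 * real (card A) * (W0 A * W1 (S - A))
           + 4 * real (card A) * real (card (S - A)) * (W0 A * W0 (S - A)))"
    
proof -
  let ?a = "real (card A)" and ?b = "real (card (S - A))"
  have "(\<Sum>l\<in>BTs A. \<Sum>r\<in>BTs (S - A). int_prod (Node l r) * real (dd (Node l r)))
      = (\<Sum>l\<in>BTs A. \<Sum>r\<in>BTs (S - A). c *
          ((int_prod l * real (dd l)) * int_prod r + int_prod l * (int_prod r * real (dd r))
           + 2 * ?b * ((int_prod l * real (Dep l)) * int_prod r)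
           + 2 * ?a * (int_prod l * (int_prod r * real (Dep r)))
           + 4 * ?a * ?b * (int_prod l * int_prod r)))"
  proof (intro sum.cong refl)
    fix l r assume l: "l \<in> BTs A" and r: "r \<in> BTs (S - A)"
    note nf = node_facts[OF S A l r]
    have "real (dd (Node l r)) = real (dd l) + real (dd r) + 2 * (?b * (real (Dep l) + ?a) + ?a * (real (Dep r) + ?b))"
      using dd_Node[OF nf(1)] nf(2,3) by simp
    moreover have "int_prod (Node l r) = c * (int_prod l * int_prod r)"
      using nf(4) cdef by (simp only: int_prod.simps)
    ultimately show "int_prod (Node l r) * real (dd (Node l r)) = c *
          ((int_prod l * real (dd l)) * int_prod r + int_prod l * (int_prod r * real (dd r))
           + 2 * ?b * ((int_prod l * real (Dep l)) * int_prod r)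
           + 2 * ?a * (int_prod l * (int_prod r * real (Dep r)))
           + 4 * ?a * ?b * (int_prod l * int_prod r))"
      by (simp add: algebra_simps)
  qed
  then show ?thesis by (simp only: W0_def W1_def W2_def dlin dprod dadd)
qed



definition cc :: "nat \<Rightarrow> real" where "cc k = fact k / 2 ^ (k - 1)"

lemma cc_lemma:
  assumes "1 \<le> k" "k \<le> m"
  shows "real (m choose (k - 1)) * cc k * cc (Suc m - k) = cc (Suc m) * (2 * real k / real (Suc m))"
proof -
  define j where "j = k - 1"
  define i where "i = m - k"
  have k: "k = Suc j" and m: "m = j + Suc i" using assms by (simp_all add: j_def i_def)
  have b: "fact j * fact (Suc i) * real (m choose j) = fact m"
  proof -
    have "fact j * fact (Suc i) * (m choose j) = (fact m :: nat)" using binomial_fact_lemma[of j m] m by simp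
    then show ?thesis by (metis of_nat_fact of_nat_mult)
  qed
  have p: "(2::real) ^ m = 2 ^ j * 2 ^ i * 2" unfolding m by (simp add: power_add)
  have sm: "Suc m - k = Suc i" by (simp add: k m)
  have "real (m choose (k - 1)) * cc k * cc (Suc m - k)
      = (fact j * fact (Suc i) * real (m choose j)) * real (Suc j) / (2 ^ j * 2 ^ i)"
    using m by (simp add: cc_def k sm)
  also have "\<dots> = fact m * real (Suc j) / (2 ^ j * 2 ^ i)" using b by simp
  also have "\<dots> = cc (Suc m) * (2 * real k / real (Suc m))"
  proof -
    have g: "\<And>F s a b M::real. M > 0 \<Longrightarrow> a > 0 \<Longrightarrow> b > 0 \<Longrightarrow> F * s / (a * b) = (M * F) / (a * b * 2) * (2 * s / M)"
      by (simp add: field_simps)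
    show ?thesis
      unfolding cc_def using g[of "real (Suc m)" "2 ^ j" "2 ^ i" "fact m" "real (Suc j)"]
      by (simp add: p k fact_Suc[of m] del: of_nat_Suc)
  qed
  finally show ?thesis .
qed

lemma splits_card:
  assumes S: "finite S" "card S = Suc m" and A: "A \<in> Splits S"
  shows "1 \<le> card A" "card A \<le> m" "card (S - A) = Suc m - card A"
proof -
  have AS: "A \<subseteq> S" "Min S \<in> A" "A \<noteq> S" using A by (auto simp: Splits_def)
  have fA: "finite A" using AS S finite_subset by blast
  show "1 \<le> card A" using AS fA by (simp add: Suc_le_eq card_gt_0_iff) blast
  have "card A < card S" using psubset_card_mono[of S A] AS S(1) by blast
  then show "card A \<le> m" using S by simp
  show "card (S - A) = Suc m - card A" using card_Diff_subset[OF fA AS(1)] S by simp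
qed

lemma W_sum:
  assumes S: "finite S" "card S = Suc m" "1 \<le> m"
    and h: "\<And>A. A \<in> Splits S \<Longrightarrow> (\<Sum>l\<in>BTs A. \<Sum>r\<in>BTs (S - A). f (Node l r)) = h (card A)"
  shows "(\<Sum>t\<in>BTs S. f t) = (\<Sum>k=1..m. real (m choose (k - 1)) * (h k :: real))"
proof -
  have "(\<Sum>t\<in>BTs S. f t) = (\<Sum>A\<in>Splits S. h (card A))"
    using sum_split[of S f] S h by simp
  also have "\<dots> = (\<Sum>k=1..m. real (m choose (k - 1)) * h k)" using sum_Splits[OF S(1,2)] .
  finally show ?thesis .
qed

lemma helper: "a * x = b * k \<Longrightarrow> a * (x * y) = b * (k * (y::real))"
  by (metis mult.assoc)

lemma main_ind:
  "finite S \<Longrightarrow> card S = n \<Longrightarrow> 1 \<le> n \<Longrightarrow>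
    W0 S = cc n \<and> W1 S = cc n * E1c n \<and> W2 S = cc n * E2c n"
proof (induction n arbitrary: S rule: less_induct)
  case (less n)
  show ?case
  proof (cases "n = 1")
    case True
    then obtain a where Sa: "S = {a}" using less.prems by (auto simp: card_1_singleton_iff)
    have "dd (Leaf a) = 0" "Dep (Leaf a) = 0" by (simp_all add: dd_def Dep_def)
    then show ?thesis using True by (simp add: Sa BTs_single W0_def W1_def W2_def cc_def E1c_def E2c_def H_def)
  next
    case False
    then obtain m where n: "n = Suc m" and m: "1 \<le> m" using less.prems by (cases n) auto
    define c where "c = 1 / (real (card S) - 1)"
    have cm: "c = 1 / real m" using less.prems n by (simp add: c_def)
    have IH: "\<And>A. A \<in> Splits S \<Longrightarrow>
        W0 A = cc (card A) \<and> W1 A = cc (card A) * E1c (card A) \<and> W2 A = cc (card A) * E2c (card A)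
      \<and> W0 (S - A) = cc (n - card A) \<and> W1 (S - A) = cc (n - card A) * E1c (n - card A)
      \<and> W2 (S - A) = cc (n - card A) * E2c (n - card A)"
    proof -
      fix A assume A: "A \<in> Splits S"
      note sc = splits_card[OF less.prems(1) less.prems(2)[unfolded n] A]
      have fA: "finite A" using A less.prems(1) by (auto simp: Splits_def intro: finite_subset)
      have "W0 A = cc (card A) \<and> W1 A = cc (card A) * E1c (card A) \<and> W2 A = cc (card A) * E2c (card A)"
        using less.IH[of "card A" A] sc fA n by simp
      moreover have "W0 (S - A) = cc (n - card A) \<and> W1 (S - A) = cc (n - card A) * E1c (n - card A)
          \<and> W2 (S - A) = cc (n - card A) * E2c (n - card A)"
        using less.IH[of "n - card A" "S - A"] sc less.prems n by simp
      ultimately show "?thesis A" by blast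
    qed
    have sc2: "\<And>A. A \<in> Splits S \<Longrightarrow> card (S - A) = n - card A"
      using splits_card[OF less.prems(1) less.prems(2)[unfolded n]] n by simp
    have key: "\<And>k. k \<in> {1..m} \<Longrightarrow> real (m choose (k - 1)) * (c * (cc k * cc (n - k)))
        = cc n * (2 / (real n * real m)) * real k"
    proof -
      fix k assume k: "k \<in> {1..m}"
      have "real (m choose (k - 1)) * (c * (cc k * cc (n - k))) = c * (real (m choose (k - 1)) * cc k * cc (Suc m - k))"
        by (simp add: n algebra_simps)
      also have "\<dots> = c * (cc (Suc m) * (2 * real k / real (Suc m)))" using cc_lemma[of k m] k by simp
      also have "\<dots> = cc n * (2 / (real n * real m)) * real k" using cm n by (simp add: mult.commute)
      finally show "real (m choose (k - 1)) * (c * (cc k * cc (n - k))) = cc n * (2 / (real n * real m)) * real k" .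
    qed
    have S: "finite S" "card S = Suc m" using less.prems n by auto
    have nm0: "real n * real m \<noteq> 0" "real m \<noteq> 0" "real n \<noteq> 0" using m n by auto
    have w0: "W0 S = (\<Sum>k=1..m. real (m choose (k - 1)) * (c * (cc k * cc (n - k))))"
      unfolding W0_def
      by (rule W_sum[OF S m]) (simp only: inner0[OF less.prems(1) _ c_def], simp add: IH)
    also have "\<dots> = (\<Sum>k=1..m. cc n * (2 / (real n * real m)) * real k)"
      by (rule sum.cong[OF refl]) (rule key)
    also have "\<dots> = cc n * (2 / (real n * real m)) * (\<Sum>k=1..m. real k)"
      by (simp only: sum_distrib_left[symmetric])
    also have "\<dots> = cc n" unfolding sum_k using nm0 n by (simp add: field_simps)
    finally have W0S: "W0 S = cc n" .
    have "W1 S = (\<Sum>k=1..m. real (m choose (k - 1)) * ((c * (cc k * cc (n - k))) * (E1c k + E1c (n - k) + real n)))"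
      unfolding W1_def
      by (rule W_sum[OF S m]) (simp only: inner1[OF less.prems(1) _ c_def], simp add: IH less.prems(2) algebra_simps)
    also have "\<dots> = (\<Sum>k=1..m. cc n * (2 / (real n * real m)) * (real k * (E1c k + E1c (Suc m - k) + real (Suc m))))"
      apply (rule sum.cong[OF refl])
      subgoal premises p for k using helper[OF key[OF p]] by (simp only: n)
      done
    also have "\<dots> = cc n * (2 / (real n * real m)) * (\<Sum>k=1..m. real k * (E1c k + E1c (Suc m - k) + real (Suc m)))"
      by (simp only: sum_distrib_left[symmetric])
    also have "\<dots> = cc n * E1c n" unfolding R1 using nm0 n by (simp add: field_simps)
    finally have W1S: "W1 S = cc n * E1c n" .
    have "W2 S = (\<Sum>k=1..m. real (m choose (k - 1)) * ((c * (cc k * cc (n - k))) *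
         (E2c k + E2c (n - k) + 2 * real (n - k) * E1c k + 2 * real k * E1c (n - k) + 4 * real k * real (n - k))))"
      unfolding W2_def
      by (rule W_sum[OF S m]) (simp only: inner2[OF less.prems(1) _ c_def], simp add: IH sc2 algebra_simps)
    also have "\<dots> = cc n * (2 / (real n * real m)) * (\<Sum>k=1..m. real k * (E2c k + E2c (Suc m - k) + 2 * real (Suc m - k) * E1c k
      + 2 * real k * E1c (Suc m - k) + 4 * real k * real (Suc m - k)))"
      unfolding sum_distrib_left
      apply (rule sum.cong[OF refl])
      subgoal premises p for k using helper[OF key[OF p]] by (simp only: n)
      done
    also have "\<dots> = cc n * E2c n" unfolding R2 using nm0 n by (simp add: field_simps)
    finally have W2S: "W2 S = cc n * E2c n" .
    show ?thesis using W0S W1S W2S by simp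
  qed
qed



lemma nd_sym: "nodal_dist t i j = nodal_dist t j i"
  by (induction t) auto

lemma nd_diag: "i \<in> set (leaves t) \<Longrightarrow> nodal_dist t i i = 0"
  by (induction t) auto

lemma tri:
  fixes f :: "nat \<Rightarrow> nat \<Rightarrow> real"
  shows "(\<And>i j. i \<in> {1..N} \<Longrightarrow> j \<in> {1..N} \<Longrightarrow> f i j = f j i) \<Longrightarrow> (\<And>i. i \<in> {1..N} \<Longrightarrow> f i i = 0)
    \<Longrightarrow> (\<Sum>i\<in>{1..N}. \<Sum>j\<in>{1..N}. f i j) = 2 * (\<Sum>i\<in>{1..N}. \<Sum>j\<in>{i<..N}. f i j)"
proof (induction N)
  case 0 then show ?case by simp
next
  case (Suc N)
  have IH: "(\<Sum>i\<in>{1..N}. \<Sum>j\<in>{1..N}. f i j) = 2 * (\<Sum>i\<in>{1..N}. \<Sum>j\<in>{i<..N}. f i j)"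
    using Suc.prems by (intro Suc.IH) auto
  have "(\<Sum>i\<in>{1..Suc N}. \<Sum>j\<in>{1..Suc N}. f i j)
      = (\<Sum>i\<in>{1..N}. \<Sum>j\<in>{1..N}. f i j) + (\<Sum>i\<in>{1..N}. f i (Suc N)) + (\<Sum>j\<in>{1..N}. f (Suc N) j) + f (Suc N) (Suc N)"
    by (simp add: sum.distrib)
  also have "(\<Sum>j\<in>{1..N}. f (Suc N) j) = (\<Sum>i\<in>{1..N}. f i (Suc N))"
    using Suc.prems(1) by (intro sum.cong) auto
  also have "f (Suc N) (Suc N) = 0" using Suc.prems(2) by simp
  also have "2 * (\<Sum>i\<in>{1..Suc N}. \<Sum>j\<in>{i<..Suc N}. f i j)
      = 2 * (\<Sum>i\<in>{1..N}. \<Sum>j\<in>{i<..N}. f i j) + 2 * (\<Sum>i\<in>{1..N}. f i (Suc N))"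
  proof -
    have "(\<Sum>i\<in>{1..N}. \<Sum>j\<in>{i<..Suc N}. f i j) = (\<Sum>i\<in>{1..N}. (\<Sum>j\<in>{i<..N}. f i j) + f i (Suc N))"
    proof (rule sum.cong[OF refl])
      fix i assume "i \<in> {1..N}"
      then have "{i<..Suc N} = insert (Suc N) {i<..N}" by auto
      then show "(\<Sum>j\<in>{i<..Suc N}. f i j) = (\<Sum>j\<in>{i<..N}. f i j) + f i (Suc N)" by simp
    qed
    then show ?thesis by (simp add: sum.distrib algebra_simps)
  qed
  ultimately show ?case using IH by simp
qed

lemma total_area_dd:
  assumes "t \<in> BTs {1..N}"
  shows "total_area N t = real (dd t) / 2"
proof -
  have s: "set (leaves t) = {1..N}" using assms by (simp add: BTs_def)
  have "real (dd t) = (\<Sum>i\<in>{1..N}. \<Sum>j\<in>{1..N}. real (nodal_dist t i j))"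
    by (simp add: dd_def s)
  also have "\<dots> = 2 * total_area N t"
    unfolding total_area_def
    by (rule tri) (auto simp: nd_sym nd_diag s)
  finally show ?thesis by simp
qed

theorem mainTheorem16:
  fixes n :: nat
  assumes "n \<ge> 2"
  shows "expected_area_yule n =
    2 * real n * (real n + 1) * (\<Sum>i=2..n. 1 / real i) - 2 * real n * (real n - 1)"
proof -
  have fin: "finite {1..n}" and cn: "card {1..n} = n" by auto
  have W: "W2 {1..n} = cc n * E2c n" using main_ind[OF fin cn] assms by simp
  have "expected_area_yule n = (\<Sum>t\<in>BTs {1..n}. (1 / (2 * cc n)) * (int_prod t * real (dd t)))"
    unfolding expected_area_yule_def BT_def BTs_def[symmetric]
    by (rule sum.cong[OF refl]) (simp add: total_area_dd yule_prob_def cc_def)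
  also have "\<dots> = (1 / (2 * cc n)) * W2 {1..n}" by (simp add: W2_def sum_distrib_left)
  also have "\<dots> = E2c n / 2" using W by (simp add: cc_def)
  finally have e1: "expected_area_yule n = E2c n / 2" .
  have e2: "(\<Sum>i=2..n. 1 / real i) = H n - 1"
  proof -
    have e: "{1..n} = insert 1 {2..n}" using assms by auto
    have "H n = (\<Sum>i\<in>insert 1 {2..n}. 1 / real i)" unfolding H_def e ..
    then show ?thesis by simp
  qed
  show ?thesis unfolding e1 e2 E2c_def by (simp add: field_simps power2_eq_square)
qed

end
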